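(* $\Lambda\cap(l-\psi)\Lambda_\wedge=(l-\psi)\Lambda$.
   Context: Let $l$ be an odd prime, $\Lambda=\mathbb{Z}_l[[T]]$, and $\Lambda_\wedge=\{\sum_{k\in\mathbb{Z}}x_kT^k: x_k\in\mathbb{Z}_l,\ x_k\to0 \text{ as } k\to-\infty\}$ (the $l$-adic completion of the localization of $\Lambda$ at the prime ideal $l\Lambda$), containing $\Lambda$. Let $\psi:\Lambda_\wedge\to\Lambda_\wedge$ be the continuous $\mathbb{Z}_l$-algebra endomorphism with $\psi(T)=(1+T)^l-1$ (so $\psi(T^{-1})=((1+T)^l-1)^{-1}$). $(l-\psi)x=lx-\psi(x)$. *)

theory Defs
  imports "HOL-Computational_Algebra.Computational_Algebra" "HOL-Number_Theory.Cong"
begin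

text \<open>
  Encoding of Lambda_wedge (l-adic completion of Z_l[[T]] localized at (l)):
  an element x = sum_k x_k T^k (x_k in Z_l, x_k -> 0 as k -> -infinity) is
  represented by the compatible family of its reductions modulo l^n,
  X n = sum_k (x_k mod l^n) T^k, an integer Laurent series (finitely many
  negative terms, exactly because x_k -> 0) with coefficients in [0, l^n).
  Lambda_wedge = inverse limit of (Z/l^n Z)((T)).
\<close>

definition fls_cong :: "int \<Rightarrow> int fls \<Rightarrow> int fls \<Rightarrow> bool" where
  "fls_cong m f g \<longleftrightarrow> (\<forall>k. [fls_nth f k = fls_nth g k] (mod m))"

definition LamW :: "nat \<Rightarrow> (nat \<Rightarrow> int fls) set" where
  "LamW l = {X. (\<forall>n k. 0 \<le> fls_nth (X n) k \<and> fls_nth (X n) k < int l ^ n) \<and>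
                (\<forall>n k. [fls_nth (X (Suc n)) k = fls_nth (X n) k] (mod int l ^ n))}"

definition Lam :: "nat \<Rightarrow> (nat \<Rightarrow> int fls) set" where
  "Lam l = {X \<in> LamW l. \<forall>n k. k < 0 \<longrightarrow> fls_nth (X n) k = 0}"

definition psiT :: "nat \<Rightarrow> int fps" where
  "psiT l = (1 + fps_X) ^ l - 1"

text \<open>psi(T) = T^l (1 + w) with w = T^(-l) ((1+T)^l - 1 - T^l), all of whose
  coefficients are divisible by l.\<close>
definition psiW :: "nat \<Rightarrow> int fls" where
  "psiW l = fls_X_intpow (- int l) * fps_to_fls (psiT l - fps_X ^ l)"

text \<open>An inverse of psi(T) modulo l^n.\<close>
definition psiTinv :: "nat \<Rightarrow> nat \<Rightarrow> int fls" where
  "psiTinv l n = fls_X_intpow (- int l) * (\<Sum>j<n. (- psiW l) ^ j)"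

text \<open>psi modulo l^n: the ring endomorphism of (Z/l^n)((T)) with T |-> psi(T),
  computed on integer representatives.\<close>
definition psin :: "nat \<Rightarrow> nat \<Rightarrow> int fls \<Rightarrow> int fls" where
  "psin l n f = fps_to_fls (fps_compose (fls_regpart f) (psiT l))
      + (\<Sum>k\<in>{1..nat (- fls_subdegree f)}. fls_const (fls_nth f (- int k)) * psiTinv l n ^ k)"

definition lpsi_image :: "nat \<Rightarrow> (nat \<Rightarrow> int fls) set \<Rightarrow> (nat \<Rightarrow> int fls) set" where
  "lpsi_image l S = {Y \<in> LamW l. \<exists>X\<in>S. \<forall>n.
      fls_cong (int l ^ n) (Y n) (fls_const (int l) * X n - psin l n (X n))}"

end

theory Submission
  imports Defs
begin

unbundle fps_syntax

definition supp_le :: "int \<Rightarrow> int fls \<Rightarrow> bool" where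
  "supp_le c f \<longleftrightarrow> (\<forall>k>c. f $$ k = 0)"

lemma supp_le_mult:
  assumes "supp_le a f" "supp_le b g"
  shows "supp_le (a+b) (f*g)"
  unfolding supp_le_def
proof (intro allI impI)
  fix n assume n: "n > a + b"
  have "(f * g) $$ n = (\<Sum>i=fls_subdegree f..n - fls_subdegree g. f $$ i * g $$ (n - i))"
    by (rule fls_times_nth(2))
  also have "\<dots> = 0"
  proof (rule sum.neutral, intro ballI)
    fix i
    show "f $$ i * g $$ (n - i) = 0"
    proof (cases "i > a")
      case True then show ?thesis using assms(1) by (simp add: supp_le_def)
    next
      case False then have "n - i > b" using n by simp
      then show ?thesis using assms(2) by (simp add: supp_le_def)
    qed
  qed
  finally show "(f * g) $$ n = 0" .
qed

lemma supp_le_mono: "a \<le> b \<Longrightarrow> supp_le a f \<Longrightarrow> supp_le b f"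
  unfolding supp_le_def by force

lemma supp_le_power: "supp_le a f \<Longrightarrow> supp_le (int j * a) (f ^ j)"
proof (induction j)
  case 0 then show ?case by (simp add: supp_le_def)
next
  case (Suc j)
  have "supp_le (a + int j * a) (f * f ^ j)" by (rule supp_le_mult[OF Suc.prems Suc.IH[OF Suc.prems]])
  then show ?case by (simp add: algebra_simps)
qed

lemma supp_le_sum: "(\<And>x. x \<in> A \<Longrightarrow> supp_le c (f x)) \<Longrightarrow> supp_le c (\<Sum>x\<in>A. f x)"
  by (simp add: supp_le_def fls_nth_sum)

lemma supp_le_uminus: "supp_le c f \<Longrightarrow> supp_le c (- f)"
  by (simp add: supp_le_def)

lemma supp_le_const_mult: "supp_le c f \<Longrightarrow> supp_le c (fls_const x * f)"
  by (simp add: supp_le_def)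

lemma binom_nth: "((1 + fps_X) ^ m :: int fps) $ i = int (m choose i)"
proof (induction m arbitrary: i)
  case 0 then show ?case by simp
next
  case (Suc m)
  have "((1 + fps_X) ^ Suc m :: int fps) = (1 + fps_X) ^ m + fps_X * (1 + fps_X) ^ m"
    by (simp add: algebra_simps)
  then have "((1 + fps_X) ^ Suc m :: int fps) $ i = ((1 + fps_X) ^ m) $ i + (fps_X * (1 + fps_X) ^ m) $ i"
    by (simp only: fps_add_nth)
  then show ?case using Suc.IH
    by (cases i) (simp_all only: fps_X_mult_nth, simp_all)
qed

lemma psiW_supp:
  assumes "l > 0"
  shows "supp_le (-1) (psiW l)"
  unfolding supp_le_def psiW_def fls_X_intpow_times_conv_shift
proof (intro allI impI)
  fix k :: int assume k: "k > -1"
  have "nat (k + int l) \<ge> l" using k by simp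
  then show "fls_shift (- (- int l)) (fps_to_fls (psiT l - fps_X ^ l)) $$ k = 0"
    using k assms by (auto simp: psiT_def binom_nth fps_X_power_iff binomial_eq_0)
qed

lemma psiTinv_supp:
  assumes "l > 0"
  shows "supp_le (- int l) (psiTinv l n)"
proof -
  have "supp_le 0 (\<Sum>j<n. (- psiW l) ^ j)"
  proof (rule supp_le_sum)
    fix j
    have "supp_le (int j * (-1)) ((- psiW l) ^ j)"
      by (rule supp_le_power[OF supp_le_uminus[OF psiW_supp[OF assms]]])
    then show "supp_le 0 ((- psiW l) ^ j)" by (rule supp_le_mono[rotated]) simp
  qed
  then show ?thesis unfolding psiTinv_def fls_X_intpow_times_conv_shift
    by (simp add: supp_le_def)
qed

lemma psin_neg_part:
  assumes "l > 0"
  shows "supp_le (-1) (\<Sum>k\<in>{1..N}. fls_const (c k) * psiTinv l n ^ k)"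
proof (rule supp_le_sum)
  fix k assume "k \<in> {1..N::nat}"
  then have "0 < k * l" using assms by simp
  then have "1 \<le> int (k * l)" by linarith
  then have "int k * (- int l) \<le> -1" by simp
  then show "supp_le (-1) (fls_const (c k) * psiTinv l n ^ k)"
    by (intro supp_le_const_mult supp_le_mono[OF _ supp_le_power[OF psiTinv_supp[OF assms]]])
qed

lemma psin_nonneg:
  assumes "l > 0" "k \<ge> 0"
  shows "psin l n f $$ k = fps_to_fls (fps_compose (fls_regpart f) (psiT l)) $$ k"
  using psin_neg_part[OF assms(1), where N="nat (- fls_subdegree f)" and c="\<lambda>k. fls_nth f (- int k)" and n=n] assms(2)
  unfolding psin_def by (simp add: supp_le_def)

lemma psin_pos:
  assumes "\<And>k. k < 0 \<Longrightarrow> f $$ k = 0"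
  shows "psin l n f = fps_to_fls (fps_compose (fls_regpart f) (psiT l))"
proof -
  have "0 \<le> fls_subdegree f" by (rule fls_subdegree_ge0I) (use assms in auto)
  then show ?thesis unfolding psin_def by simp
qed

theorem mainTheorem5:
  fixes l :: nat
  assumes "prime l" and "odd l"
  shows "Lam l \<inter> lpsi_image l (LamW l) = lpsi_image l (Lam l)"
proof
  have l0: "l > 0" using assms(1) prime_gt_0_nat by blast
  show "Lam l \<inter> lpsi_image l (LamW l) \<subseteq> lpsi_image l (Lam l)"
  proof
    fix Y assume Y: "Y \<in> Lam l \<inter> lpsi_image l (LamW l)"
    then obtain X where X: "X \<in> LamW l"
      and XY: "\<And>n. fls_cong (int l ^ n) (Y n) (fls_const (int l) * X n - psin l n (X n))"
      unfolding lpsi_image_def by blast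
    have YL: "Y \<in> LamW l" and Yneg: "\<And>n k. k < 0 \<Longrightarrow> fls_nth (Y n) k = 0"
      using Y unfolding Lam_def by auto
    define X' where "X' n = fps_to_fls (fls_regpart (X n))" for n
    have X'nth: "X' n $$ k = (if k < 0 then 0 else X n $$ k)" for n k
      by (simp add: X'_def)
    have "X' \<in> Lam l"
    proof -
      have b: "\<forall>n k. 0 \<le> fls_nth (X n) k \<and> fls_nth (X n) k < int l ^ n"
        and c: "\<forall>n k. [fls_nth (X (Suc n)) k = fls_nth (X n) k] (mod int l ^ n)"
        using X unfolding LamW_def by auto
      have "\<forall>n k. 0 \<le> fls_nth (X' n) k \<and> fls_nth (X' n) k < int l ^ n"
        using b l0 by (simp add: X'nth)
      moreover have "\<forall>n k. [fls_nth (X' (Suc n)) k = fls_nth (X' n) k] (mod int l ^ n)"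
        using c by (simp add: X'nth)
      moreover have "\<forall>n k. k < 0 \<longrightarrow> fls_nth (X' n) k = 0" by (simp add: X'nth)
      ultimately show ?thesis unfolding Lam_def LamW_def by blast
    qed
    moreover have "fls_cong (int l ^ n) (Y n) (fls_const (int l) * X' n - psin l n (X' n))" for n
      unfolding fls_cong_def
    proof
      fix k
      have ps': "psin l n (X' n) = fps_to_fls (fps_compose (fls_regpart (X n)) (psiT l))"
        by (subst psin_pos) (auto simp: X'nth X'_def)
      show "[Y n $$ k = (fls_const (int l) * X' n - psin l n (X' n)) $$ k] (mod int l ^ n)"
      proof (cases "k < 0")
        case True then show ?thesis by (simp add: Yneg ps' X'nth)
      next
        case False
        then show ?thesis using XY[of n, unfolded fls_cong_def, rule_format, of k] psin_nonneg[OF l0, of k n "X n"]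
          by (simp add: ps' X'nth)
      qed
    qed
    ultimately show "Y \<in> lpsi_image l (Lam l)"
      using YL unfolding lpsi_image_def by blast
  qed
next
  show "lpsi_image l (Lam l) \<subseteq> Lam l \<inter> lpsi_image l (LamW l)"
  proof
    fix Y assume Y: "Y \<in> lpsi_image l (Lam l)"
    then obtain X where X: "X \<in> Lam l"
      and XY: "\<And>n. fls_cong (int l ^ n) (Y n) (fls_const (int l) * X n - psin l n (X n))"
      unfolding lpsi_image_def by blast
    have YL: "Y \<in> LamW l" using Y unfolding lpsi_image_def by blast
    have "Y \<in> lpsi_image l (LamW l)"
      using YL X XY unfolding lpsi_image_def Lam_def by blast
    moreover have "fls_nth (Y n) k = 0" if k: "k < 0" for n k
    proof -
      have Xneg: "\<And>k. k < 0 \<Longrightarrow> X n $$ k = 0" using X unfolding Lam_def by auto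
      have "[Y n $$ k = 0] (mod int l ^ n)"
        using XY[of n, unfolded fls_cong_def, rule_format, of k] k
        by (simp add: psin_pos[OF Xneg] Xneg)
      then have d: "int l ^ n dvd Y n $$ k" by (simp add: cong_0_iff)
      have b: "0 \<le> Y n $$ k" "Y n $$ k < int l ^ n" using YL unfolding LamW_def by auto
      show ?thesis
      proof (rule ccontr)
        assume "Y n $$ k \<noteq> 0"
        with b have "0 < Y n $$ k" by simp
        from zdvd_imp_le[OF d this] b show False by simp
      qed
    qed
    ultimately show "Y \<in> Lam l \<inter> lpsi_image l (LamW l)"
      using YL unfolding Lam_def by blast
  qed
qed

end
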